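(* For $1\le j\le n$ let $X_j\sim\mathrm{ME}(\alpha_j,T_j,t_j)$ be independent random variables, and for $1\le k\le n$ let $X_{k:n}$ be the $k$-th order statistic of $\{X_1,\dots,X_n\}$ (so $X_{1:n}\le\cdots\le X_{n:n}$). Then the density $f_{k:n}$ of $X_{k:n}$ belongs to $\mathrm{MEam}$, i.e. it is of the form $\sum_{j=1}^L c_j g_j$ with $L\in\mathbb{N}_+$, each $g_j$ an ME density, $c_j\in\mathbb{R}$ and $\sum_j c_j=1$.
   Context: A matrix-exponential (ME) density is a probability density on $[0,\infty)$ of the form $f(x)=\alpha e^{Tx}t$, $x\ge0$, with $\alpha$ a real row vector, $T$ a real square matrix and $t$ a real column vector of compatible dimensions; we write $X\sim\mathrm{ME}(\alpha,T,t)$ if $X$ has this density. $\mathrm{MEam}$ is the class of nonnegative functions $\sum_{j=1}^L c_j g_j$ with $L\in\mathbb{N}_+$, $g_j$ ME densities, $c_j\in\mathbb{R}$ (possibly negative), $\sum_j c_j=1$. *)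

theory Defs
  imports "HOL-Probability.Probability" "Jordan_Normal_Form.Matrix"
begin

definition mat_exp :: "real mat \<Rightarrow> real mat" where
  "mat_exp A = mat (dim_row A) (dim_col A)
     (\<lambda>ij. \<Sum>k. index_mat ((1 / fact k) \<cdot>\<^sub>m (A ^\<^sub>m k)) ij)"

definition ME_density :: "(real \<Rightarrow> real) \<Rightarrow> bool" where
  "ME_density f \<longleftrightarrow>
     (\<exists>m \<alpha> T t. \<alpha> \<in> carrier_vec m \<and> T \<in> carrier_mat m m \<and> t \<in> carrier_vec m \<and>
        (\<forall>x\<ge>0. f x = scalar_prod \<alpha> (mat_exp (x \<cdot>\<^sub>m T) *\<^sub>v t)) \<and>
        (\<forall>x<0. f x = 0) \<and>
        (\<forall>x. 0 \<le> f x) \<and>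
        (f has_integral 1) {0..})"

definition MEam :: "(real \<Rightarrow> real) \<Rightarrow> bool" where
  "MEam f \<longleftrightarrow> (\<forall>x. 0 \<le> f x) \<and>
     (\<exists>(L::nat) (c::nat \<Rightarrow> real) (g::nat \<Rightarrow> real \<Rightarrow> real). L \<ge> 1 \<and> (\<forall>j\<in>{1..L}. ME_density (g j)) \<and>
        (\<Sum>j=1..L. c j) = (1::real) \<and>
        (\<forall>x. f x = (\<Sum>j=1..L. c j * g j x)))"

definition order_stat :: "(nat \<Rightarrow> 'a \<Rightarrow> real) \<Rightarrow> nat \<Rightarrow> nat \<Rightarrow> 'a \<Rightarrow> real" where
  "order_stat X n k \<omega> = sort (map (\<lambda>j. X j \<omega>) [1..<n+1]) ! (k - 1)"

end

theory Submission
  imports Defs "HOL-Library.Countable"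
begin

lemma pow_entry_0: "T \<in> carrier_mat m m \<Longrightarrow> i < m \<Longrightarrow> j < m \<Longrightarrow>
   (T ^\<^sub>m 0) $$ (i,j) = (if i = j then 1 else (0::real))"
  by simp

lemma pow_entry_Suc: "T \<in> carrier_mat m m \<Longrightarrow> i < m \<Longrightarrow> j < m \<Longrightarrow>
   (T ^\<^sub>m Suc k) $$ (i,j) = (\<Sum>l\<in>{0..<m}. (T ^\<^sub>m k) $$ (i,l) * T $$ (l,j))"
  by (simp add: scalar_prod_def)

lemma pow_entry_Suc': assumes T: "T \<in> carrier_mat m m" shows "i < m \<Longrightarrow> j < m \<Longrightarrow>
   (T ^\<^sub>m Suc k) $$ (i,j) = (\<Sum>l\<in>{0..<m}. T $$ (i,l) * (T ^\<^sub>m k) $$ (l,j) :: real)"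
proof (induction k arbitrary: i j)
  case 0
  have "T ^\<^sub>m Suc 0 = T" using T by simp
  moreover have "(\<Sum>l\<in>{0..<m}. T $$ (i,l) * (T ^\<^sub>m 0) $$ (l,j)) = (\<Sum>l\<in>{0..<m}. if l = j then T $$ (i,l) else 0)"
    using T 0 by (intro sum.cong) auto
  ultimately show ?case using 0 by simp
next
  case (Suc k)
  have "(T ^\<^sub>m Suc (Suc k)) $$ (i,j) = (\<Sum>l\<in>{0..<m}. (T ^\<^sub>m Suc k) $$ (i,l) * T $$ (l,j))"
    using pow_entry_Suc[OF T Suc.prems] .
  also have "\<dots> = (\<Sum>l\<in>{0..<m}. (\<Sum>l'\<in>{0..<m}. T $$ (i,l') * (T ^\<^sub>m k) $$ (l',l)) * T $$ (l,j))"
    using Suc by simp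
  also have "\<dots> = (\<Sum>l'\<in>{0..<m}. T $$ (i,l') * (\<Sum>l\<in>{0..<m}. (T ^\<^sub>m k) $$ (l',l) * T $$ (l,j)))"
    by (simp add: sum_distrib_left sum_distrib_right mult.assoc) (rule sum.swap)
  also have "\<dots> = (\<Sum>l'\<in>{0..<m}. T $$ (i,l') * (T ^\<^sub>m Suc k) $$ (l',j))"
    using pow_entry_Suc[OF T _ Suc.prems(2)] by simp
  finally show ?case .
qed

definition Bnd :: "real mat \<Rightarrow> nat \<Rightarrow> real" where
  "Bnd T m = (\<Sum>l\<in>{0..<m}. \<Sum>l'\<in>{0..<m}. \<bar>T $$ (l,l')\<bar>)"

lemma Bnd_nonneg: "0 \<le> Bnd T m" unfolding Bnd_def by (intro sum_nonneg) auto

lemma col_le_Bnd: "j < m \<Longrightarrow> (\<Sum>l\<in>{0..<m}. \<bar>T $$ (l,j)\<bar>) \<le> Bnd T m"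
  unfolding Bnd_def
  by (intro sum_mono member_le_sum) auto

lemma pow_entry_bound: assumes T: "T \<in> carrier_mat m m"
  shows "i < m \<Longrightarrow> j < m \<Longrightarrow> \<bar>(T ^\<^sub>m k) $$ (i,j)\<bar> \<le> Bnd T m ^ k"
proof (induction k arbitrary: i j)
  case 0 then show ?case using T by simp
next
  case (Suc k)
  have "\<bar>(T ^\<^sub>m Suc k) $$ (i,j)\<bar> \<le> (\<Sum>l\<in>{0..<m}. \<bar>(T ^\<^sub>m k) $$ (i,l)\<bar> * \<bar>T $$ (l,j)\<bar>)"
    unfolding pow_entry_Suc[OF T Suc.prems] by (rule order.trans[OF sum_abs]) (simp add: abs_mult)
  also have "\<dots> \<le> (\<Sum>l\<in>{0..<m}. Bnd T m ^ k * \<bar>T $$ (l,j)\<bar>)"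
    using Suc.IH Suc.prems by (intro sum_mono mult_right_mono) auto
  also have "\<dots> = Bnd T m ^ k * (\<Sum>l\<in>{0..<m}. \<bar>T $$ (l,j)\<bar>)" by (simp add: sum_distrib_left)
  also have "\<dots> \<le> Bnd T m ^ k * Bnd T m"
    using col_le_Bnd[OF Suc.prems(2)] Bnd_nonneg by (intro mult_left_mono) auto
  finally show ?case by (simp add: mult.commute)
qed

lemma smult_pow_entry: fixes x :: real assumes T: "T \<in> carrier_mat m m"
  shows "i < m \<Longrightarrow> j < m \<Longrightarrow> ((x \<cdot>\<^sub>m T) ^\<^sub>m k) $$ (i,j) = x ^ k * (T ^\<^sub>m k) $$ (i,j)"
proof (induction k arbitrary: i j)
  case 0 then show ?case using T by simp
next
  case (Suc k)
  have xT: "x \<cdot>\<^sub>m T \<in> carrier_mat m m" using T by simp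
  show ?case
    unfolding pow_entry_Suc[OF xT Suc.prems] pow_entry_Suc[OF T Suc.prems]
    using Suc T by (simp only: sum_distrib_left) (intro sum.cong refl, simp add: mult_ac)
qed

definition ecoef :: "real mat \<Rightarrow> nat \<Rightarrow> nat \<Rightarrow> nat \<Rightarrow> real" where
  "ecoef T i j k = (T ^\<^sub>m k) $$ (i,j) / fact k"

lemma mat_exp_entry: assumes T: "T \<in> carrier_mat m m" and ij: "i < m" "j < m"
  shows "mat_exp (x \<cdot>\<^sub>m T) $$ (i,j) = (\<Sum>k. ecoef T i j k * x ^ k)"
  using T ij unfolding mat_exp_def ecoef_def
  by (simp add: smult_pow_entry[OF T ij] mult_ac)

lemma ecoef_summable: assumes T: "T \<in> carrier_mat m m" and ij: "i < m" "j < m"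
  shows "summable (\<lambda>k. ecoef T i j k * y ^ k)"
proof (rule summable_comparison_test)
  show "summable (\<lambda>k. inverse (fact k) * (Bnd T m * \<bar>y\<bar>) ^ k)" by (rule summable_exp)
  show "\<exists>N. \<forall>n\<ge>N. norm (ecoef T i j n * y ^ n) \<le> inverse (fact n) * (Bnd T m * \<bar>y\<bar>) ^ n"
  proof (intro exI allI impI)
    fix n :: nat
    have "\<bar>(T ^\<^sub>m n) $$ (i,j)\<bar> * \<bar>y\<bar> ^ n \<le> Bnd T m ^ n * \<bar>y\<bar> ^ n"
      using pow_entry_bound[OF T ij] by (intro mult_right_mono) auto
    then show "norm (ecoef T i j n * y ^ n) \<le> inverse (fact n) * (Bnd T m * \<bar>y\<bar>) ^ n"
      unfolding ecoef_def by (simp add: abs_mult power_abs power_mult_distrib divide_simps)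
  qed
qed

lemma diffs_ecoef: assumes T: "T \<in> carrier_mat m m" and ij: "i < m" "j < m"
  shows "diffs (ecoef T i j) n = (\<Sum>l\<in>{0..<m}. T $$ (i,l) * ecoef T l j n)"
proof -
  have *: "of_nat (Suc n) * (S / fact (Suc n)) = S / fact n" for S :: real
    by (simp add: divide_simps del: of_nat_Suc)
  have "diffs (ecoef T i j) n = of_nat (Suc n) * ((T ^\<^sub>m Suc n)$$(i,j) / fact (Suc n))"
    by (simp add: diffs_def ecoef_def)
  also have "\<dots> = (T ^\<^sub>m Suc n)$$(i,j) / fact n" by (rule *)
  also have "\<dots> = (\<Sum>l\<in>{0..<m}. T $$ (i,l) * ecoef T l j n)"
    unfolding pow_entry_Suc'[OF T ij] sum_divide_distrib ecoef_def by simp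
  finally show ?thesis .
qed

lemma mat_exp_entry_deriv: assumes T: "T \<in> carrier_mat m m" and ij: "i < m" "j < m"
  shows "((\<lambda>x. mat_exp (x \<cdot>\<^sub>m T) $$ (i,j)) has_real_derivative
          (\<Sum>l\<in>{0..<m}. T $$ (i,l) * mat_exp (x \<cdot>\<^sub>m T) $$ (l,j))) (at x)"
proof -
  have "((\<lambda>x. \<Sum>k. ecoef T i j k * x ^ k) has_real_derivative (\<Sum>k. diffs (ecoef T i j) k * x ^ k)) (at x)"
    by (rule termdiffs_strong_converges_everywhere) (rule ecoef_summable[OF T ij])
  also have "(\<Sum>k. diffs (ecoef T i j) k * x ^ k) = (\<Sum>k. \<Sum>l\<in>{0..<m}. T $$ (i,l) * (ecoef T l j k * x ^ k))"
    by (simp add: diffs_ecoef[OF T ij] sum_distrib_right mult.assoc)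
  also have "\<dots> = (\<Sum>l\<in>{0..<m}. \<Sum>k. T $$ (i,l) * (ecoef T l j k * x ^ k))"
    by (rule suminf_sum) (use ecoef_summable[OF T _ ij(2)] summable_mult in auto)
  also have "\<dots> = (\<Sum>l\<in>{0..<m}. T $$ (i,l) * mat_exp (x \<cdot>\<^sub>m T) $$ (l,j))"
    by (intro sum.cong refl, subst suminf_mult) (auto simp: mat_exp_entry[OF T _ ij(2)] ecoef_summable[OF T _ ij(2)])
  finally show ?thesis using mat_exp_entry[OF T ij] by simp
qed

lemma mat_exp_entry_0: assumes T: "T \<in> carrier_mat m m" and ij: "i < m" "j < m"
  shows "mat_exp (0 \<cdot>\<^sub>m T) $$ (i,j) = (if i = j then 1 else 0)"
  unfolding mat_exp_entry[OF T ij] using powser_zero[of "ecoef T i j"] T ij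
  by (simp add: ecoef_def)

definition ODErep :: "(real \<Rightarrow> real) \<Rightarrow> bool" where
  "ODErep h \<longleftrightarrow> (\<exists>(I::nat set) u A a. finite I \<and>
     (\<forall>i\<in>I. \<forall>x\<ge>0. (u i has_real_derivative (\<Sum>j\<in>I. A i j * u j x)) (at x within {0..})) \<and>
     (\<forall>x\<ge>0. h x = (\<Sum>i\<in>I. a i * u i x)))"

lemma ODErepI:
  fixes I :: "'i::countable set" and u :: "'i \<Rightarrow> real \<Rightarrow> real"
  assumes fin: "finite I"
    and d: "\<And>i x. i\<in>I \<Longrightarrow> 0 \<le> x \<Longrightarrow> (u i has_real_derivative (\<Sum>j\<in>I. A i j * u j x)) (at x within {0..})"
    and h: "\<And>x. 0 \<le> x \<Longrightarrow> h x = (\<Sum>i\<in>I. a i * u i x)"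
  shows "ODErep h"
proof -
  let ?e = "to_nat :: 'i \<Rightarrow> nat"
  have inj: "inj_on ?e I" by (simp add: inj_on_def)
  define u' where "u' k = u (from_nat k)" for k
  define A' where "A' k l = A (from_nat k) (from_nat l)" for k l
  define a' where "a' k = a (from_nat k)" for k
  have sumr: "(\<Sum>l\<in>?e ` I. g l) = (\<Sum>j\<in>I. g (?e j))" for g :: "nat \<Rightarrow> real"
    using sum.reindex[OF inj, of g] by (simp add: comp_def)
  have 1: "finite (?e ` I)" using fin by simp
  have 2: "\<forall>k\<in>?e ` I. \<forall>x\<ge>0. (u' k has_real_derivative (\<Sum>l\<in>?e ` I. A' k l * u' l x)) (at x within {0..})"
    using d by (auto simp: sumr u'_def A'_def)
  have 3: "\<forall>x\<ge>0. h x = (\<Sum>l\<in>?e ` I. a' l * u' l x)"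
    using h by (simp add: sumr a'_def u'_def)
  show ?thesis unfolding ODErep_def using 1 2 3 by blast
qed

lemma ODErep_nat:
  assumes "ODErep h"
  shows "\<exists>(m::nat) u A a. (\<forall>i<m. \<forall>x\<ge>0. (u i has_real_derivative (\<Sum>j<m. A i j * u j x)) (at x within {0..})) \<and>
     (\<forall>x\<ge>0. h x = (\<Sum>i<m. a i * u i x))"
proof -
  obtain I :: "nat set" and u A a where fin: "finite I"
    and d: "\<forall>i\<in>I. \<forall>x\<ge>0. (u i has_real_derivative (\<Sum>j\<in>I. A i j * u j x)) (at x within {0..})"
    and h: "\<forall>x\<ge>0. h x = (\<Sum>i\<in>I. a i * u i x)"
    using assms unfolding ODErep_def by blast
  obtain b where b: "bij_betw b {0..<card I} I" using ex_bij_betw_nat_finite[OF fin] by blast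
  have sumr: "(\<Sum>j<card I. g (b j)) = (\<Sum>j\<in>I. g j)" for g :: "nat \<Rightarrow> real"
    using sum.reindex_bij_betw[OF b, of g] by (simp add: atLeast0LessThan)
  have bI: "i < card I \<Longrightarrow> b i \<in> I" for i using b by (auto simp: bij_betw_def)
  have 1: "\<forall>i<card I. \<forall>x\<ge>0. ((\<lambda>k. u (b k)) i has_real_derivative
      (\<Sum>j<card I. (\<lambda>k l. A (b k) (b l)) i j * (\<lambda>k. u (b k)) j x)) (at x within {0..})"
    using d bI by (simp add: sumr[of "\<lambda>j. A _ j * u j _"])
  have 2: "\<forall>x\<ge>0. h x = (\<Sum>i<card I. (\<lambda>k. a (b k)) i * (\<lambda>k. u (b k)) i x)"
    using h by (simp add: sumr[of "\<lambda>j. a j * u j _"])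
  show ?thesis
    using 1 2 by (rule_tac x="card I" in exI, rule_tac x="\<lambda>k. u (b k)" in exI,
        rule_tac x="\<lambda>k l. A (b k) (b l)" in exI, rule_tac x="\<lambda>k. a (b k)" in exI) simp
qed

lemma ode_unique0:
  fixes I :: "'i set" and w :: "'i \<Rightarrow> real \<Rightarrow> real"
  assumes fin: "finite I"
    and d: "\<And>i x. i\<in>I \<Longrightarrow> 0 \<le> x \<Longrightarrow> (w i has_real_derivative (\<Sum>j\<in>I. A i j * w j x)) (at x within {0..})"
    and z: "\<And>i. i\<in>I \<Longrightarrow> w i 0 = 0"
    and i: "i \<in> I" and x: "0 \<le> x"
  shows "w i x = 0"
proof -
  define K where "K = (\<Sum>i\<in>I. \<Sum>j\<in>I. \<bar>A i j\<bar>)"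
  define q where "q y = (\<Sum>i\<in>I. w i y * w i y)" for y
  define D where "D y = (\<Sum>i\<in>I. 2 * w i y * (\<Sum>j\<in>I. A i j * w j y))" for y
  define p where "p y = exp (-(2*K) * y) * q y" for y
  have q0: "0 \<le> q y" for y unfolding q_def by (intro sum_nonneg) auto
  have sq_le: "w i y * w i y \<le> q y" if "i \<in> I" for i y unfolding q_def using fin that
    by (intro member_le_sum) auto
  have prod_le: "\<bar>w i y * w j y\<bar> \<le> q y" if "i\<in>I" "j\<in>I" for i j y
  proof -
    have "0 \<le> (\<bar>w i y\<bar> - \<bar>w j y\<bar>) * (\<bar>w i y\<bar> - \<bar>w j y\<bar>)" by simp
    then have "2 * \<bar>w i y * w j y\<bar> \<le> w i y * w i y + w j y * w j y"
      by (simp add: abs_mult algebra_simps)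
    then show ?thesis using sq_le[OF that(1), of y] sq_le[OF that(2), of y] by linarith
  qed
  have Dle: "D y \<le> 2*K*q y" for y
  proof -
    have "D y = 2 * (\<Sum>i\<in>I. \<Sum>j\<in>I. A i j * (w i y * w j y))"
      unfolding D_def by (simp add: sum_distrib_left mult_ac)
    also have "\<dots> \<le> 2 * (\<Sum>i\<in>I. \<Sum>j\<in>I. \<bar>A i j\<bar> * q y)"
    proof (intro mult_left_mono sum_mono)
      fix i j assume "i \<in> I" "j \<in> I"
      have "A i j * (w i y * w j y) \<le> \<bar>A i j\<bar> * \<bar>w i y * w j y\<bar>"
        by (metis abs_ge_self abs_mult)
      also have "\<dots> \<le> \<bar>A i j\<bar> * q y" using prod_le[OF \<open>i\<in>I\<close> \<open>j\<in>I\<close>] by (intro mult_left_mono) auto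
      finally show "A i j * (w i y * w j y) \<le> \<bar>A i j\<bar> * q y" .
    qed simp
    also have "\<dots> = 2*K*q y" unfolding K_def by (simp add: sum_distrib_right)
    finally show ?thesis .
  qed
  have dq: "(q has_real_derivative D y) (at y within {0..})" if "0 \<le> y" for y
    unfolding q_def D_def
  proof (rule DERIV_sum)
    fix i assume "i \<in> I"
    show "((\<lambda>x. w i x * w i x) has_real_derivative 2 * w i y * (\<Sum>j\<in>I. A i j * w j y)) (at y within {0..})"
      by (rule DERIV_cong[OF DERIV_mult[OF d[OF \<open>i\<in>I\<close> that] d[OF \<open>i\<in>I\<close> that]]]) (simp add: algebra_simps)
  qed
  have dp: "(p has_real_derivative exp (-(2*K)*y) * (D y - 2*K*q y)) (at y within {0..})" if "0 \<le> y" for y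
  proof -
    have e: "((\<lambda>y. exp (-(2*K)*y)) has_real_derivative exp (-(2*K)*y) * (-(2*K))) (at y within {0..})"
      by (rule DERIV_cong[OF DERIV_chain2[OF DERIV_exp DERIV_cmult_Id]]) simp
    show ?thesis unfolding p_def
      by (rule DERIV_cong[OF DERIV_mult[OF e dq[OF that]]]) (simp add: algebra_simps)
  qed
  have cont: "continuous_on {0..x} p"
    unfolding continuous_on_eq_continuous_within
  proof
    fix y assume y: "y \<in> {0..x}"
    have "continuous (at y within {0..}) p" using DERIV_continuous[OF dp] y by auto
    then show "continuous (at y within {0..x}) p" by (rule continuous_within_subset) auto
  qed
  have "p x \<le> p 0"
  proof (rule DERIV_nonpos_imp_decreasing_open[OF x _ cont])
    fix y :: real assume y: "0 < y" "y < x"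
    have "at y within {0..} = at y within UNIV"
      by (rule at_within_nhd[of y "{0<..}"]) (use y in auto)
    then have "(p has_real_derivative exp (-(2*K)*y) * (D y - 2*K*q y)) (at y)"
      using dp[of y] y by simp
    moreover have "exp (-(2*K)*y) * (D y - 2*K*q y) \<le> 0"
      using Dle[of y] by (simp add: mult_nonneg_nonpos)
    ultimately show "\<exists>z. (p has_real_derivative z) (at y) \<and> z \<le> 0" by blast
  qed
  moreover have "q 0 = 0" unfolding q_def using z by simp
  ultimately have "q x \<le> 0" unfolding p_def by (simp add: mult_le_0_iff)
  then have "w i x * w i x \<le> 0" using sq_le[OF i, of x] by linarith
  then show ?thesis by (simp add: mult_le_0_iff, linarith)
qed

lemma mat_exp_dims[simp]: "dim_row (mat_exp A) = dim_row A" "dim_col (mat_exp A) = dim_col A"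
  by (simp_all add: mat_exp_def)

lemma ME_sum_form:
  assumes a: "a \<in> carrier_vec m" and T: "T \<in> carrier_mat m m" and t: "t \<in> carrier_vec m"
  shows "scalar_prod a (mat_exp (x \<cdot>\<^sub>m T) *\<^sub>v t) = (\<Sum>i<m. a$i * (\<Sum>j<m. mat_exp (x \<cdot>\<^sub>m T) $$ (i,j) * t$j))"
  using a T t by (auto simp: scalar_prod_def atLeast0LessThan intro!: sum.cong)

lemma ME_ODErep:
  assumes a: "a \<in> carrier_vec m" and T: "T \<in> carrier_mat m m" and t: "t \<in> carrier_vec m"
  shows "ODErep (\<lambda>x. scalar_prod a (mat_exp (x \<cdot>\<^sub>m T) *\<^sub>v t))"
proof (rule ODErepI[where I="{..<m}" and u="\<lambda>i x. \<Sum>j<m. mat_exp (x \<cdot>\<^sub>m T) $$ (i,j) * t$j"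
      and A="\<lambda>i j. T $$ (i,j)" and a="\<lambda>i. a$i"])
  show "finite {..<m}" by simp
  show "scalar_prod a (mat_exp (x \<cdot>\<^sub>m T) *\<^sub>v t) = (\<Sum>i<m. a$i * (\<Sum>j<m. mat_exp (x \<cdot>\<^sub>m T) $$ (i,j) * t$j))" for x
    by (rule ME_sum_form[OF a T t])
  fix i x assume i: "i \<in> {..<m}"
  have "((\<lambda>x. \<Sum>j<m. mat_exp (x \<cdot>\<^sub>m T) $$ (i,j) * t$j) has_real_derivative
      (\<Sum>j<m. (\<Sum>l\<in>{0..<m}. T $$ (i,l) * mat_exp (x \<cdot>\<^sub>m T) $$ (l,j)) * t$j)) (at x)"
    by (rule DERIV_sum, rule DERIV_cmult_right, rule mat_exp_entry_deriv[OF T]) (use i in auto)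
  also have "(\<Sum>j<m. (\<Sum>l\<in>{0..<m}. T $$ (i,l) * mat_exp (x \<cdot>\<^sub>m T) $$ (l,j)) * t$j) =
     (\<Sum>l<m. T $$ (i,l) * (\<Sum>j<m. mat_exp (x \<cdot>\<^sub>m T) $$ (l,j) * t$j))"
    by (simp add: atLeast0LessThan sum_distrib_left sum_distrib_right mult_ac) (rule sum.swap)
  finally show "((\<lambda>x. \<Sum>j<m. mat_exp (x \<cdot>\<^sub>m T) $$ (i,j) * t$j) has_real_derivative
      (\<Sum>l\<in>{..<m}. T $$ (i,l) * (\<Sum>j<m. mat_exp (x \<cdot>\<^sub>m T) $$ (l,j) * t$j))) (at x within {0..})"
    by (rule has_field_derivative_at_within)
qed

lemma ODErep_ME:
  assumes "ODErep h"
  shows "\<exists>m a T t. a \<in> carrier_vec m \<and> T \<in> carrier_mat m m \<and> t \<in> carrier_vec m \<and>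
     (\<forall>x\<ge>0. h x = scalar_prod a (mat_exp (x \<cdot>\<^sub>m T) *\<^sub>v t))"
proof -
  obtain m :: nat and u A a where
    d: "\<And>i x. i<m \<Longrightarrow> 0\<le>x \<Longrightarrow> (u i has_real_derivative (\<Sum>j<m. A i j * u j x)) (at x within {0..})"
    and h: "\<And>x. 0\<le>x \<Longrightarrow> h x = (\<Sum>i<m. a i * u i x)"
    using ODErep_nat[OF assms] by blast
  define T where "T = mat m m (\<lambda>(i,j). A i j)"
  define t where "t = vec m (\<lambda>j. u j 0)"
  define av where "av = vec m a"
  have T: "T \<in> carrier_mat m m" by (simp add: T_def)
  have t: "t \<in> carrier_vec m" by (simp add: t_def)
  have av: "av \<in> carrier_vec m" by (simp add: av_def)
  define E where "E x i j = mat_exp (x \<cdot>\<^sub>m T) $$ (i,j)" for x i j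
  have Ed: "((\<lambda>x. E x i j) has_real_derivative (\<Sum>l<m. A i l * E x l j)) (at x)" if "i<m" "j<m" for x :: real and i j
    using mat_exp_entry_deriv[OF T that, of x] that by (simp add: E_def T_def atLeast0LessThan)
  define w where "w i x = u i x - (\<Sum>j<m. E x i j * u j 0)" for i x
  have w0: "w i x = 0" if "i \<in> {..<m}" "0 \<le> x" for i x
  proof (rule ode_unique0[of "{..<m}" w A])
    fix i and x :: real assume i: "i \<in> {..<m}" and x: "0 \<le> x"
    have "((\<lambda>x. \<Sum>j<m. E x i j * u j 0) has_real_derivative (\<Sum>j<m. (\<Sum>l<m. A i l * E x l j) * u j 0)) (at x within {0..})"
      by (rule has_field_derivative_at_within, rule DERIV_sum, rule DERIV_cmult_right, rule Ed) (use i in auto)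
    from DERIV_diff[OF d[OF _ x] this] i
    have "(w i has_real_derivative (\<Sum>j<m. A i j * u j x) - (\<Sum>j<m. (\<Sum>l<m. A i l * E x l j) * u j 0)) (at x within {0..})"
      unfolding w_def by auto
    moreover have "(\<Sum>j<m. A i j * u j x) - (\<Sum>j<m. (\<Sum>l<m. A i l * E x l j) * u j 0) = (\<Sum>j\<in>{..<m}. A i j * w j x)"
    proof -
      have "(\<Sum>j<m. (\<Sum>l<m. A i l * E x l j) * u j 0) = (\<Sum>l<m. A i l * (\<Sum>j<m. E x l j * u j 0))"
        by (simp add: sum_distrib_left sum_distrib_right mult_ac) (rule sum.swap)
      then show ?thesis by (simp add: w_def right_diff_distrib sum_subtractf)
    qed
    ultimately show "(w i has_real_derivative (\<Sum>j\<in>{..<m}. A i j * w j x)) (at x within {0..})" by simp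
  next
    fix i assume i: "i \<in> {..<m}"
    have "(\<Sum>j<m. E 0 i j * u j 0) = (\<Sum>j<m. if i = j then u j 0 else 0)"
      using i by (intro sum.cong refl) (simp add: E_def mat_exp_entry_0[OF T])
    also have "\<dots> = u i 0" using i by (simp add: sum.delta)
    finally show "w i 0 = 0" by (simp add: w_def)
  qed (use that in auto)
  show ?thesis
  proof (intro exI conjI allI impI)
    show "av \<in> carrier_vec m" "T \<in> carrier_mat m m" "t \<in> carrier_vec m" by fact+
    fix x :: real assume x: "0 \<le> x"
    have "h x = (\<Sum>i<m. a i * (\<Sum>j<m. E x i j * u j 0))"
      unfolding h[OF x] using w0 x by (intro sum.cong refl) (simp add: w_def)
    also have "\<dots> = scalar_prod av (mat_exp (x \<cdot>\<^sub>m T) *\<^sub>v t)"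
      unfolding ME_sum_form[OF av T t] by (simp add: av_def t_def E_def)
    finally show "h x = scalar_prod av (mat_exp (x \<cdot>\<^sub>m T) *\<^sub>v t)" .
  qed
qed

lemma ODErepE:
  assumes "ODErep h"
  obtains I :: "nat set" and u A a where "finite I"
    "\<And>i x. i\<in>I \<Longrightarrow> 0\<le>x \<Longrightarrow> (u i has_real_derivative (\<Sum>j\<in>I. A i j * u j x)) (at x within {0..})"
    "\<And>x. 0\<le>x \<Longrightarrow> h x = (\<Sum>i\<in>I. a i * u i x)"
  using assms unfolding ODErep_def by blast

lemma ODErep_const: "ODErep (\<lambda>x. c)"
  by (rule ODErepI[where I="{()}" and u="\<lambda>_ _. 1" and A="\<lambda>_ _. 0" and a="\<lambda>_. c"]) auto

lemma ODErep_cmult: assumes "ODErep h" shows "ODErep (\<lambda>x. c * h x)"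
proof -
  obtain I :: "nat set" and u A a where fin: "finite I"
    and d: "\<And>i x. i\<in>I \<Longrightarrow> 0\<le>x \<Longrightarrow> (u i has_real_derivative (\<Sum>j\<in>I. A i j * u j x)) (at x within {0..})"
    and h: "\<And>x. 0\<le>x \<Longrightarrow> h x = (\<Sum>i\<in>I. a i * u i x)"
    using ODErepE[OF assms] by blast
  show ?thesis
  proof (rule ODErepI[where I=I and u=u and A=A and a="\<lambda>i. c * a i"])
    show "finite I" by (rule fin)
    show "(u i has_real_derivative (\<Sum>j\<in>I. A i j * u j x)) (at x within {0..})" if "i\<in>I" "0\<le>x" for i x
      using d that .
    show "c * h x = (\<Sum>i\<in>I. c * a i * u i x)" if "0 \<le> x" for x
      using h[OF that] by (simp add: sum_distrib_left mult.assoc)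
  qed
qed

lemma ODErep_add: assumes "ODErep h1" "ODErep h2" shows "ODErep (\<lambda>x. h1 x + h2 x)"
proof -
  obtain I1 :: "nat set" and u1 A1 a1 where fin1: "finite I1"
    and d1: "\<And>i x. i\<in>I1 \<Longrightarrow> 0\<le>x \<Longrightarrow> (u1 i has_real_derivative (\<Sum>j\<in>I1. A1 i j * u1 j x)) (at x within {0..})"
    and h1: "\<And>x. 0\<le>x \<Longrightarrow> h1 x = (\<Sum>i\<in>I1. a1 i * u1 i x)"
    using ODErepE[OF assms(1)] by blast
  obtain I2 :: "nat set" and u2 A2 a2 where fin2: "finite I2"
    and d2: "\<And>i x. i\<in>I2 \<Longrightarrow> 0\<le>x \<Longrightarrow> (u2 i has_real_derivative (\<Sum>j\<in>I2. A2 i j * u2 j x)) (at x within {0..})"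
    and h2: "\<And>x. 0\<le>x \<Longrightarrow> h2 x = (\<Sum>i\<in>I2. a2 i * u2 i x)"
    using ODErepE[OF assms(2)] by blast
  define u where "u = case_sum u1 u2"
  define A where "A k l = (case (k,l) of (Inl i, Inl j) \<Rightarrow> A1 i j | (Inr i, Inr j) \<Rightarrow> A2 i j | _ \<Rightarrow> 0)" for k l
  define a where "a = case_sum a1 a2"
  show ?thesis
  proof (rule ODErepI[where I="I1 <+> I2" and u=u and A=A and a=a])
    show "finite (I1 <+> I2)" using fin1 fin2 by simp
    fix x :: real assume x: "0 \<le> x"
    show "h1 x + h2 x = (\<Sum>i\<in>I1 <+> I2. a i * u i x)"
      by (simp add: sum.Plus fin1 fin2 h1 h2 x a_def u_def comp_def)
  next
    fix k and x :: real assume k: "k \<in> I1 <+> I2" and x: "0 \<le> x"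
    have S: "(\<Sum>j\<in>I1 <+> I2. A k j * u j x) = (\<Sum>j\<in>I1. A k (Inl j) * u1 j x) + (\<Sum>j\<in>I2. A k (Inr j) * u2 j x)"
      by (simp add: sum.Plus fin1 fin2 u_def comp_def)
    show "(u k has_real_derivative (\<Sum>j\<in>I1 <+> I2. A k j * u j x)) (at x within {0..})"
    proof (cases k)
      case (Inl i)
      then have "i \<in> I1" using k by auto
      then show ?thesis unfolding S using d1[of i x] x Inl by (simp add: A_def u_def)
    next
      case (Inr i)
      then have "i \<in> I2" using k by auto
      then show ?thesis unfolding S using d2[of i x] x Inr by (simp add: A_def u_def)
    qed
  qed
qed

lemma ODErep_mult: assumes "ODErep h1" "ODErep h2" shows "ODErep (\<lambda>x. h1 x * h2 x)"
proof -
  obtain I1 :: "nat set" and u1 A1 a1 where fin1: "finite I1"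
    and d1: "\<And>i x. i\<in>I1 \<Longrightarrow> 0\<le>x \<Longrightarrow> (u1 i has_real_derivative (\<Sum>j\<in>I1. A1 i j * u1 j x)) (at x within {0..})"
    and h1: "\<And>x. 0\<le>x \<Longrightarrow> h1 x = (\<Sum>i\<in>I1. a1 i * u1 i x)"
    using ODErepE[OF assms(1)] by blast
  obtain I2 :: "nat set" and u2 A2 a2 where fin2: "finite I2"
    and d2: "\<And>i x. i\<in>I2 \<Longrightarrow> 0\<le>x \<Longrightarrow> (u2 i has_real_derivative (\<Sum>j\<in>I2. A2 i j * u2 j x)) (at x within {0..})"
    and h2: "\<And>x. 0\<le>x \<Longrightarrow> h2 x = (\<Sum>i\<in>I2. a2 i * u2 i x)"
    using ODErepE[OF assms(2)] by blast
  define u where "u p x = u1 (fst p) x * u2 (snd p) x" for p x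
  define A where "A p q = (if snd q = snd p then A1 (fst p) (fst q) else 0) + (if fst q = fst p then A2 (snd p) (snd q) else 0)" for p q
  define a where "a p = a1 (fst p) * a2 (snd p)" for p
  have cart: "(\<Sum>q\<in>I1 \<times> I2. g q) = (\<Sum>i'\<in>I1. \<Sum>j'\<in>I2. g (i',j'))" for g :: "nat \<times> nat \<Rightarrow> real"
    by (simp add: sum.cartesian_product)
  show ?thesis
  proof (rule ODErepI[where I="I1 \<times> I2" and u=u and A=A and a=a])
    show "finite (I1 \<times> I2)" using fin1 fin2 by simp
    fix x :: real assume x: "0 \<le> x"
    show "h1 x * h2 x = (\<Sum>p\<in>I1 \<times> I2. a p * u p x)"
      unfolding cart h1[OF x] h2[OF x] sum_product by (simp add: a_def u_def mult_ac)
  next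
    fix p and x :: real assume p: "p \<in> I1 \<times> I2" and x: "0 \<le> x"
    obtain i j where ij: "p = (i,j)" "i \<in> I1" "j \<in> I2" using p by auto
    have e1: "(\<Sum>i'\<in>I1. \<Sum>j'\<in>I2. (if j' = j then A1 i i' else 0) * (u1 i' x * u2 j' x)) =
        (\<Sum>i'\<in>I1. A1 i i' * u1 i' x) * u2 j x"
    proof -
      have "(\<Sum>i'\<in>I1. \<Sum>j'\<in>I2. (if j' = j then A1 i i' else 0) * (u1 i' x * u2 j' x))
          = (\<Sum>i'\<in>I1. \<Sum>j'\<in>I2. if j' = j then A1 i i' * (u1 i' x * u2 j' x) else 0)"
        by (intro sum.cong refl) auto
      also have "\<dots> = (\<Sum>i'\<in>I1. A1 i i' * (u1 i' x * u2 j x))"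
        using ij fin2 by (simp add: sum.delta')
      also have "\<dots> = (\<Sum>i'\<in>I1. A1 i i' * u1 i' x) * u2 j x"
        by (simp add: sum_distrib_right mult.assoc)
      finally show ?thesis .
    qed
    have e2: "(\<Sum>i'\<in>I1. \<Sum>j'\<in>I2. (if i' = i then A2 j j' else 0) * (u1 i' x * u2 j' x)) =
        u1 i x * (\<Sum>j'\<in>I2. A2 j j' * u2 j' x)"
    proof -
      have "(\<Sum>i'\<in>I1. \<Sum>j'\<in>I2. (if i' = i then A2 j j' else 0) * (u1 i' x * u2 j' x))
          = (\<Sum>i'\<in>I1. if i' = i then (\<Sum>j'\<in>I2. A2 j j' * (u1 i' x * u2 j' x)) else 0)"
        by (intro sum.cong refl) auto
      also have "\<dots> = (\<Sum>j'\<in>I2. A2 j j' * (u1 i x * u2 j' x))"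
        using ij fin1 by (simp add: sum.delta')
      also have "\<dots> = u1 i x * (\<Sum>j'\<in>I2. A2 j j' * u2 j' x)"
        by (simp add: sum_distrib_left mult_ac)
      finally show ?thesis .
    qed
    have "(\<Sum>q\<in>I1 \<times> I2. A p q * u q x) = (\<Sum>i'\<in>I1. A1 i i' * u1 i' x) * u2 j x + u1 i x * (\<Sum>j'\<in>I2. A2 j j' * u2 j' x)"
      unfolding cart e1[symmetric] e2[symmetric]
      by (simp add: A_def u_def ij distrib_right sum.distrib cong: if_cong)
    moreover have uij: "u p = (\<lambda>x. u1 i x * u2 j x)" by (simp add: u_def ij fun_eq_iff)
    ultimately show "(u p has_real_derivative (\<Sum>q\<in>I1 \<times> I2. A p q * u q x)) (at x within {0..})"
      using DERIV_cong[OF DERIV_mult[OF d1[OF ij(2) x] d2[OF ij(3) x]]] by (simp add: ij mult.commute)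
  qed
qed

lemma ODErep_sum: "finite S \<Longrightarrow> (\<And>s. s\<in>S \<Longrightarrow> ODErep (f s)) \<Longrightarrow> ODErep (\<lambda>x. \<Sum>s\<in>S. f s x)"
proof (induction S rule: finite_induct)
  case empty then show ?case using ODErep_const[of 0] by simp
next
  case (insert s S)
  then show ?case using ODErep_add[of "f s" "\<lambda>x. \<Sum>s\<in>S. f s x"] by simp
qed

lemma ODErep_prod: "finite S \<Longrightarrow> (\<And>s. s\<in>S \<Longrightarrow> ODErep (f s)) \<Longrightarrow> ODErep (\<lambda>x. \<Prod>s\<in>S. f s x)"
proof (induction S rule: finite_induct)
  case empty then show ?case using ODErep_const[of 1] by simp
next
  case (insert s S)
  then show ?case using ODErep_mult[of "f s" "\<lambda>x. \<Prod>s\<in>S. f s x"] by simp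
qed

lemma ODErep_diff: "ODErep h1 \<Longrightarrow> ODErep h2 \<Longrightarrow> ODErep (\<lambda>x. h1 x - h2 x)"
  using ODErep_add[of h1 "\<lambda>x. (-1) * h2 x"] ODErep_cmult[of h2 "-1"] by simp

lemma ODErep_cont: assumes "ODErep h" shows "continuous_on {0..} h"
proof -
  obtain I :: "nat set" and u A a where fin: "finite I"
    and d: "\<And>i x. i\<in>I \<Longrightarrow> 0\<le>x \<Longrightarrow> (u i has_real_derivative (\<Sum>j\<in>I. A i j * u j x)) (at x within {0..})"
    and h: "\<And>x. 0\<le>x \<Longrightarrow> h x = (\<Sum>i\<in>I. a i * u i x)"
    using ODErepE[OF assms] by blast
  have "continuous_on {0..} (u i)" if "i \<in> I" for i
    unfolding continuous_on_eq_continuous_within using DERIV_continuous[OF d[OF that]] by auto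
  then have "continuous_on {0..} (\<lambda>x. \<Sum>i\<in>I. a i * u i x)"
    by (intro continuous_on_sum continuous_on_mult_left) auto
  then show ?thesis by (rule continuous_on_cong[THEN iffD1, rotated 2]) (auto simp: h)
qed

lemma ODErep_deriv: assumes "ODErep h"
  shows "\<exists>h'. ODErep h' \<and> (\<forall>x\<ge>0. (h has_real_derivative h' x) (at x within {0..}))"
proof -
  obtain I :: "nat set" and u A a where fin: "finite I"
    and d: "\<And>i x. i\<in>I \<Longrightarrow> 0\<le>x \<Longrightarrow> (u i has_real_derivative (\<Sum>j\<in>I. A i j * u j x)) (at x within {0..})"
    and h: "\<And>x. 0\<le>x \<Longrightarrow> h x = (\<Sum>i\<in>I. a i * u i x)"
    using ODErepE[OF assms] by blast
  define h' where "h' x = (\<Sum>i\<in>I. a i * (\<Sum>j\<in>I. A i j * u j x))" for x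
  have "ODErep h'"
  proof (rule ODErepI[where I=I and u=u and A=A and a="\<lambda>j. \<Sum>i\<in>I. a i * A i j"])
    show "h' x = (\<Sum>j\<in>I. (\<Sum>i\<in>I. a i * A i j) * u j x)" for x
      unfolding h'_def by (simp add: sum_distrib_left sum_distrib_right mult_ac) (rule sum.swap)
  qed (use fin d in auto)
  moreover have "(h has_real_derivative h' x) (at x within {0..})" if x: "0 \<le> x" for x
  proof -
    have "((\<lambda>x. \<Sum>i\<in>I. a i * u i x) has_real_derivative h' x) (at x within {0..})"
      unfolding h'_def by (intro DERIV_sum DERIV_cmult d x)
    then show ?thesis
      by (rule has_field_derivative_transform_within[where d=1]) (use x h in auto)
  qed
  ultimately show ?thesis by blast
qed

lemma ODErep_integral: assumes "ODErep f" shows "ODErep (\<lambda>x. integral {0..x} f)"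
proof -
  obtain I :: "nat set" and u A a where fin: "finite I"
    and d: "\<And>i x. i\<in>I \<Longrightarrow> 0\<le>x \<Longrightarrow> (u i has_real_derivative (\<Sum>j\<in>I. A i j * u j x)) (at x within {0..})"
    and h: "\<And>x. 0\<le>x \<Longrightarrow> f x = (\<Sum>i\<in>I. a i * u i x)"
    using ODErepE[OF assms] by blast
  have cont: "continuous_on {0..} f" by (rule ODErep_cont[OF assms])
  have dI: "((\<lambda>y. integral {0..y} f) has_real_derivative f x) (at x within {0..})" if x: "0 \<le> x" for x
  proof -
    have "((\<lambda>y. integral {0..y} f) has_real_derivative f x) (at x within {0..x+1})"
      by (rule integral_has_real_derivative) (use x in \<open>auto intro: continuous_on_subset[OF cont]\<close>)
    moreover have "at x within {0..x+1} = at x within {0..}"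
      by (rule at_within_nhd[of x "{..<x+1}"]) auto
    ultimately show ?thesis by simp
  qed
  define u' where "u' k = (case k of None \<Rightarrow> (\<lambda>y. integral {0..y} f) | Some i \<Rightarrow> u i)" for k
  define A' where "A' k l = (case (k,l) of (None, Some j) \<Rightarrow> a j | (Some i, Some j) \<Rightarrow> A i j | _ \<Rightarrow> 0)" for k l
  define a' where "a' k = (case k of None \<Rightarrow> 1 | Some (_::nat) \<Rightarrow> (0::real))" for k
  have sumI: "(\<Sum>l\<in>insert None (Some ` I). g l) = g None + (\<Sum>j\<in>I. g (Some j))" for g :: "nat option \<Rightarrow> real"
    using fin by (simp add: sum.reindex)
  show ?thesis
  proof (rule ODErepI[where I="insert None (Some ` I)" and u=u' and A=A' and a=a'])
    show "finite (insert None (Some ` I))" using fin by simp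
    show "integral {0..x} f = (\<Sum>l\<in>insert None (Some ` I). a' l * u' l x)" for x
      unfolding sumI by (simp add: a'_def u'_def)
  next
    fix k and x :: real assume k: "k \<in> insert None (Some ` I)" and x: "0 \<le> x"
    show "(u' k has_real_derivative (\<Sum>l\<in>insert None (Some ` I). A' k l * u' l x)) (at x within {0..})"
    proof (cases k)
      case None
      then show ?thesis unfolding sumI using dI[OF x] h[OF x] by (simp add: A'_def u'_def)
    next
      case (Some i)
      then have "i \<in> I" using k by auto
      then show ?thesis unfolding sumI using d[of i x] x Some by (simp add: A'_def u'_def)
    qed
  qed
qed

lemma sorted_nth_le_iff:
  fixes s :: "real list"
  assumes s: "sorted s" and i: "i < length s"
  shows "s ! i \<le> x \<longleftrightarrow> Suc i \<le> card {p. p < length s \<and> s ! p \<le> x}"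
proof
  assume le: "s ! i \<le> x"
  have "{0..<Suc i} \<subseteq> {p. p < length s \<and> s ! p \<le> x}"
  proof
    fix p assume "p \<in> {0..<Suc i}"
    then have "p \<le> i" by simp
    then have "s ! p \<le> s ! i" using sorted_nth_mono[OF s _ i] by blast
    then show "p \<in> {p. p < length s \<and> s ! p \<le> x}" using le i \<open>p \<le> i\<close> by auto
  qed
  from card_mono[OF _ this] show "Suc i \<le> card {p. p < length s \<and> s ! p \<le> x}" by simp
next
  assume c: "Suc i \<le> card {p. p < length s \<and> s ! p \<le> x}"
  show "s ! i \<le> x"
  proof (rule ccontr)
    assume "\<not> s ! i \<le> x"
    then have "{p. p < length s \<and> s ! p \<le> x} \<subseteq> {..<i}"
      using sorted_nth_mono[OF s, of i] by (auto simp: not_less) (meson le_less_trans not_le)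
    from card_mono[OF _ this] c show False by simp
  qed
qed

lemma order_stat_le_iff:
  assumes "1 \<le> k" "k \<le> n"
  shows "order_stat X n k \<omega> \<le> x \<longleftrightarrow> k \<le> card {j\<in>{1..n}. X j \<omega> \<le> x}"
proof -
  define xs where "xs = map (\<lambda>j. X j \<omega>) [1..<n+1]"
  define s where "s = sort xs"
  have len: "length s = n" by (simp add: s_def xs_def)
  have "order_stat X n k \<omega> = s ! (k - 1)" by (simp add: order_stat_def s_def xs_def)
  moreover have "s ! (k - 1) \<le> x \<longleftrightarrow> Suc (k - 1) \<le> card {p. p < length s \<and> s ! p \<le> x}"
    by (rule sorted_nth_le_iff) (use assms len in \<open>auto simp: s_def\<close>)
  moreover have "card {p. p < length s \<and> s ! p \<le> x} = length (filter (\<lambda>v. v \<le> x) s)"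
    by (simp add: length_filter_conv_card)
  moreover have "length (filter (\<lambda>v. v \<le> x) s) = length (filter (\<lambda>v. v \<le> x) xs)"
    by (simp add: s_def filter_sort)
  moreover have "length (filter (\<lambda>v. v \<le> x) xs) = card {j\<in>{1..n}. X j \<omega> \<le> x}"
  proof -
    have "length (filter (\<lambda>v. v \<le> x) xs) = length (filter (\<lambda>j. X j \<omega> \<le> x) [1..<n+1])"
      by (simp add: xs_def filter_map comp_def)
    also have "\<dots> = card (set (filter (\<lambda>j. X j \<omega> \<le> x) [1..<n+1]))"
      by (rule distinct_card[symmetric]) simp
    also have "set (filter (\<lambda>j. X j \<omega> \<le> x) [1..<n+1]) = {j\<in>{1..n}. X j \<omega> \<le> x}"
      by auto
    finally show ?thesis .
  qed
  ultimately show ?thesis using assms by simp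
qed

context prob_space
begin

lemma cdf_of_density:
  fixes g :: "real \<Rightarrow> real" and x :: real
  assumes D: "distributed M lborel Y (\<lambda>x. ennreal (g x))" and nn: "\<And>x. 0 \<le> g x"
    and neg: "\<And>x. x < 0 \<Longrightarrow> g x = 0" and cont: "continuous_on {0..} g"
  shows "prob {\<omega>\<in>space M. Y \<omega> \<le> x} = integral {0..x} g"
proof -
  have Ym: "Y \<in> measurable M lborel" by (rule distributed_measurable[OF D])
  have set: "{\<omega>\<in>space M. Y \<omega> \<le> x} = Y -` {..x} \<inter> space M" by auto
  have int: "g integrable_on {0..x}"
    by (rule integrable_continuous_interval, rule continuous_on_subset[OF cont]) auto
  have "emeasure M (Y -` {..x} \<inter> space M) = (\<integral>\<^sup>+y. ennreal (g y) * indicator {..x} y \<partial>lborel)"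
    by (rule distributed_emeasure[OF D]) (simp add: atMost_borel)
  also have "\<dots> = (\<integral>\<^sup>+y. ennreal (g y) * indicator {0..x} y \<partial>lborel)"
    by (intro nn_integral_cong) (auto simp: indicator_def neg not_le)
  also have "\<dots> = ennreal (integral {0..x} g)"
  proof (rule nn_integral_has_integral_lebesgue')
    show "(g has_integral integral {0..x} g) {0..x}"
      by (rule integrable_integral[OF int])
  qed (use nn in auto)
  finally have "emeasure M {\<omega>\<in>space M. Y \<omega> \<le> x} = ennreal (integral {0..x} g)" unfolding set .
  moreover have "0 \<le> integral {0..x} g" by (rule integral_nonneg[OF int]) (auto intro: nn)
  ultimately show ?thesis by (simp add: measure_def)
qed

lemma Ev_eq:
  fixes n :: nat and X :: "nat \<Rightarrow> 'a \<Rightarrow> real" and x :: real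
  assumes "1 \<le> n"
  shows "{\<omega>\<in>space M. \<forall>j\<in>{1..n}. (X j \<omega> \<le> x \<longleftrightarrow> j \<in> S)} =
     (\<Inter>j\<in>{1..n}. X j -` (if j \<in> S then {..x} else {x<..}) \<inter> space M)"
  using assms by (auto simp: not_le split: if_splits)

lemma Ev_sets:
  fixes n :: nat and X :: "nat \<Rightarrow> 'a \<Rightarrow> real" and x :: real
  assumes "1 \<le> n" and meas: "\<And>j. j\<in>{1..n} \<Longrightarrow> X j \<in> borel_measurable M"
  shows "{\<omega>\<in>space M. \<forall>j\<in>{1..n}. (X j \<omega> \<le> x \<longleftrightarrow> j \<in> S)} \<in> events"
  unfolding Ev_eq[OF assms(1)]
  by (rule sets.finite_INT) (use assms in \<open>auto intro!: measurable_sets[OF meas] simp: atMost_borel greaterThan_borel\<close>)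

lemma prob_Ev:
  fixes n :: nat and X :: "nat \<Rightarrow> 'a \<Rightarrow> real" and x :: real
  assumes indep: "indep_vars (\<lambda>_. borel) X {1..n}" and n: "1 \<le> n" and S: "S \<subseteq> {1..n}"
    and meas: "\<And>j. j\<in>{1..n} \<Longrightarrow> X j \<in> borel_measurable M"
  shows "prob {\<omega>\<in>space M. \<forall>j\<in>{1..n}. (X j \<omega> \<le> x \<longleftrightarrow> j \<in> S)} =
    (\<Prod>j\<in>S. prob {\<omega>\<in>space M. X j \<omega> \<le> x}) * (\<Prod>j\<in>{1..n}-S. 1 - prob {\<omega>\<in>space M. X j \<omega> \<le> x})"
proof -
  define A where "A j = (if j \<in> S then {..x} else {x<..})" for j
  have "prob {\<omega>\<in>space M. \<forall>j\<in>{1..n}. (X j \<omega> \<le> x \<longleftrightarrow> j \<in> S)} = prob (\<Inter>j\<in>{1..n}. X j -` A j \<inter> space M)"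
    unfolding Ev_eq[OF n] A_def ..
  also have "\<dots> = (\<Prod>j\<in>{1..n}. prob (X j -` A j \<inter> space M))"
    by (rule indep_varsD[OF indep]) (use n in \<open>auto simp: A_def atMost_borel greaterThan_borel\<close>)
  also have "\<dots> = (\<Prod>j\<in>{1..n}. if j \<in> S then prob {\<omega>\<in>space M. X j \<omega> \<le> x} else 1 - prob {\<omega>\<in>space M. X j \<omega> \<le> x})"
  proof (rule prod.cong[OF refl])
    fix j assume j: "j \<in> {1..n}"
    have ev: "{\<omega>\<in>space M. X j \<omega> \<le> x} \<in> events"
      using measurable_sets[OF meas[OF j], of "{..x}"] by (simp add: vimage_def Int_def conj_commute atMost_borel)
    show "prob (X j -` A j \<inter> space M) = (if j \<in> S then prob {\<omega>\<in>space M. X j \<omega> \<le> x} else 1 - prob {\<omega>\<in>space M. X j \<omega> \<le> x})"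
    proof (cases "j \<in> S")
      case True
      then show ?thesis by (simp add: A_def vimage_def Int_def conj_commute)
    next
      case False
      have "X j -` A j \<inter> space M = space M - {\<omega>\<in>space M. X j \<omega> \<le> x}" using False by (auto simp: A_def)
      then show ?thesis using False prob_compl[OF ev] by simp
    qed
  qed
  also have "\<dots> = (\<Prod>j\<in>S. prob {\<omega>\<in>space M. X j \<omega> \<le> x}) * (\<Prod>j\<in>{1..n}-S. 1 - prob {\<omega>\<in>space M. X j \<omega> \<le> x})"
  proof -
    have "{1..n} \<inter> {j. j \<in> S} = S" "{1..n} \<inter> - {j. j \<in> S} = {1..n} - S" using S by auto
    then show ?thesis by (simp add: prod.If_cases)
  qed
  finally show ?thesis .
qed

lemma os_event:
  fixes n :: nat and X :: "nat \<Rightarrow> 'a \<Rightarrow> real" and x :: real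
  assumes "1 \<le> k" "k \<le> n"
  shows "{\<omega>\<in>space M. order_stat X n k \<omega> \<le> x} =
    (\<Union>S\<in>{S. S \<subseteq> {1..n} \<and> k \<le> card S}. {\<omega>\<in>space M. \<forall>j\<in>{1..n}. (X j \<omega> \<le> x \<longleftrightarrow> j \<in> S)})"
proof -
  have "\<omega> \<in> {\<omega>\<in>space M. order_stat X n k \<omega> \<le> x} \<longleftrightarrow>
    \<omega> \<in> (\<Union>S\<in>{S. S \<subseteq> {1..n} \<and> k \<le> card S}. {\<omega>\<in>space M. \<forall>j\<in>{1..n}. (X j \<omega> \<le> x \<longleftrightarrow> j \<in> S)})" for \<omega>
  proof
    assume "\<omega> \<in> {\<omega>\<in>space M. order_stat X n k \<omega> \<le> x}"
    then have "\<omega> \<in> space M" "k \<le> card {j\<in>{1..n}. X j \<omega> \<le> x}" using order_stat_le_iff[OF assms, of X \<omega> x] by auto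
    then show "\<omega> \<in> (\<Union>S\<in>{S. S \<subseteq> {1..n} \<and> k \<le> card S}. {\<omega>\<in>space M. \<forall>j\<in>{1..n}. (X j \<omega> \<le> x \<longleftrightarrow> j \<in> S)})"
      by (intro UN_I[of "{j\<in>{1..n}. X j \<omega> \<le> x}"]) auto
  next
    assume "\<omega> \<in> (\<Union>S\<in>{S. S \<subseteq> {1..n} \<and> k \<le> card S}. {\<omega>\<in>space M. \<forall>j\<in>{1..n}. (X j \<omega> \<le> x \<longleftrightarrow> j \<in> S)})"
    then obtain S where S: "S \<subseteq> {1..n}" "k \<le> card S" "\<omega> \<in> space M" "\<forall>j\<in>{1..n}. (X j \<omega> \<le> x \<longleftrightarrow> j \<in> S)"
      by auto
    then have "S = {j\<in>{1..n}. X j \<omega> \<le> x}" by auto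
    then show "\<omega> \<in> {\<omega>\<in>space M. order_stat X n k \<omega> \<le> x}" using S order_stat_le_iff[OF assms, of X \<omega> x] by auto
  qed
  then show ?thesis by blast
qed

lemma os_prob:
  fixes n :: nat and X :: "nat \<Rightarrow> 'a \<Rightarrow> real" and x :: real
  assumes "1 \<le> k" "k \<le> n" and indep: "indep_vars (\<lambda>_. borel) X {1..n}"
    and meas: "\<And>j. j\<in>{1..n} \<Longrightarrow> X j \<in> borel_measurable M"
  shows "{\<omega>\<in>space M. order_stat X n k \<omega> \<le> x} \<in> events"
    and "prob {\<omega>\<in>space M. order_stat X n k \<omega> \<le> x} =
      (\<Sum>S\<in>{S. S \<subseteq> {1..n} \<and> k \<le> card S}.
         (\<Prod>j\<in>S. prob {\<omega>\<in>space M. X j \<omega> \<le> x}) * (\<Prod>j\<in>{1..n}-S. 1 - prob {\<omega>\<in>space M. X j \<omega> \<le> x}))"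
proof -
  have n: "1 \<le> n" using assms by simp
  have fin: "finite {S. S \<subseteq> {1..n} \<and> k \<le> card S}" by (rule finite_subset[of _ "Pow {1..n}"]) auto
  show "{\<omega>\<in>space M. order_stat X n k \<omega> \<le> x} \<in> events"
    unfolding os_event[OF assms(1,2)] using fin Ev_sets[where X=X and x=x, OF n meas] by blast
  have "prob {\<omega>\<in>space M. order_stat X n k \<omega> \<le> x} =
     (\<Sum>S\<in>{S. S \<subseteq> {1..n} \<and> k \<le> card S}. prob {\<omega>\<in>space M. \<forall>j\<in>{1..n}. (X j \<omega> \<le> x \<longleftrightarrow> j \<in> S)})"
    unfolding os_event[OF assms(1,2)]
  proof (rule finite_measure_finite_Union[OF fin])
    show "(\<lambda>S. {\<omega>\<in>space M. \<forall>j\<in>{1..n}. (X j \<omega> \<le> x \<longleftrightarrow> j \<in> S)}) ` {S. S \<subseteq> {1..n} \<and> k \<le> card S} \<subseteq> events"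
      using Ev_sets[where X=X and x=x, OF n meas] by blast
    show "disjoint_family_on (\<lambda>S. {\<omega>\<in>space M. \<forall>j\<in>{1..n}. (X j \<omega> \<le> x \<longleftrightarrow> j \<in> S)}) {S. S \<subseteq> {1..n} \<and> k \<le> card S}"
      unfolding disjoint_family_on_def by blast
  qed
  also have "\<dots> = (\<Sum>S\<in>{S. S \<subseteq> {1..n} \<and> k \<le> card S}.
         (\<Prod>j\<in>S. prob {\<omega>\<in>space M. X j \<omega> \<le> x}) * (\<Prod>j\<in>{1..n}-S. 1 - prob {\<omega>\<in>space M. X j \<omega> \<le> x}))"
    by (intro sum.cong refl prob_Ev[OF indep n _ meas]) auto
  finally show "prob {\<omega>\<in>space M. order_stat X n k \<omega> \<le> x} = \<dots>" .
qed

end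

lemma ODErep_cong: "ODErep h \<Longrightarrow> (\<And>x. 0 \<le> x \<Longrightarrow> h x = g x) \<Longrightarrow> ODErep g"
  unfolding ODErep_def by metis

lemma deriv_nonneg_mono:
  fixes H :: "real \<Rightarrow> real"
  assumes mono: "\<And>y z. 0 \<le> y \<Longrightarrow> y \<le> z \<Longrightarrow> H y \<le> H z"
    and d: "(H has_real_derivative D) (at x within {0..})" and x: "0 \<le> x"
  shows "0 \<le> D"
proof (rule tendsto_lowerbound)
  show "((\<lambda>y. (H y - H x) / (y - x)) \<longlongrightarrow> D) (at x within {0..})"
    using d by (simp add: has_field_derivative_iff)
  show "\<forall>\<^sub>F y in at x within {0..}. 0 \<le> (H y - H x) / (y - x)"
    unfolding eventually_at_filter
  proof (intro always_eventually allI impI)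
    fix y :: real assume "y \<noteq> x" "y \<in> {0..}"
    then show "0 \<le> (H y - H x) / (y - x)"
      using mono[of x y] mono[of y x] x
      by (cases "x < y") (auto intro: divide_nonneg_pos divide_nonpos_neg)
  qed
  have "x islimpt {0..}"
    unfolding islimpt_approachable
  proof (intro allI impI)
    fix e :: real assume "0 < e"
    then show "\<exists>x'\<in>{0..}. x' \<noteq> x \<and> dist x' x < e"
      using x by (intro bexI[of _ "x + e/2"]) (auto simp: dist_real_def)
  qed
  then show "at x within {0..} \<noteq> bot" using trivial_limit_within by blast
qed

theorem proposition3:
  fixes M :: "'a measure" and X :: "nat \<Rightarrow> 'a \<Rightarrow> real" and f :: "nat \<Rightarrow> real \<Rightarrow> real"
    and n k :: nat
  assumes "prob_space M"
    and "1 \<le> k" and "k \<le> n"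
    and "\<And>j. j \<in> {1..n} \<Longrightarrow> ME_density (f j)"
    and "\<And>j. j \<in> {1..n} \<Longrightarrow> distributed M lborel (X j) (\<lambda>x. ennreal (f j x))"
    and "prob_space.indep_vars M (\<lambda>_. borel) X {1..n}"
  shows "\<exists>g. distributed M lborel (order_stat X n k) (\<lambda>x. ennreal (g x)) \<and> MEam g"
proof -
  interpret P: prob_space M by (rule assms(1))
  have n1: "1 \<le> n" using assms(2,3) by simp
  have Xm: "X j \<in> borel_measurable M" if "j \<in> {1..n}" for j
    using distributed_measurable[OF assms(5)[OF that]] by simp
  have fnn: "0 \<le> f j x" if "j \<in> {1..n}" for j x
    using assms(4)[OF that] unfolding ME_density_def by blast
  have fneg: "f j x = 0" if "j \<in> {1..n}" "x < 0" for j x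
    using assms(4)[OF that(1)] that(2) unfolding ME_density_def by blast
  have fODE: "ODErep (f j)" if jn: "j \<in> {1..n}" for j
  proof -
    obtain m \<alpha> T t where "\<alpha> \<in> carrier_vec m" "T \<in> carrier_mat m m" "t \<in> carrier_vec m"
      and eq: "\<forall>x\<ge>0. f j x = scalar_prod \<alpha> (mat_exp (x \<cdot>\<^sub>m T) *\<^sub>v t)"
      using assms(4)[OF jn] unfolding ME_density_def by blast
    from ME_ODErep[OF this(1-3)] show ?thesis by (rule ODErep_cong) (use eq in auto)
  qed
  define F where "F j x = P.prob {\<omega>\<in>space M. X j \<omega> \<le> x}" for j x
  have Fint: "F j x = integral {0..x} (f j)" if "j \<in> {1..n}" for j x
    unfolding F_def
    by (rule P.cdf_of_density[OF assms(5)[OF that]]) (use fnn fneg ODErep_cont[OF fODE] that in auto)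
  have FODE: "ODErep (F j)" if "j \<in> {1..n}" for j
    by (rule ODErep_cong[OF ODErep_integral[OF fODE[OF that]]]) (simp add: Fint[OF that])
  have Fle0: "F j x = 0" if "j \<in> {1..n}" "x \<le> 0" for j x
  proof (cases "x = 0")
    case True then show ?thesis by (simp add: Fint[OF that(1)])
  next
    case False then have "{0..x} = {}" using that by auto
    then show ?thesis by (simp add: Fint[OF that(1)])
  qed
  define \<S> where "\<S> = {S. S \<subseteq> {1..n} \<and> k \<le> card S}"
  have finS: "finite \<S>" unfolding \<S>_def by (rule finite_subset[of _ "Pow {1..n}"]) auto
  define \<Phi> where "\<Phi> x = (\<Sum>S\<in>\<S>. (\<Prod>j\<in>S. F j x) * (\<Prod>j\<in>{1..n}-S. 1 - F j x))" for x
  have Hev: "{\<omega>\<in>space M. order_stat X n k \<omega> \<le> x} \<in> P.events" for x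
    by (rule P.os_prob(1)[OF assms(2,3,6) Xm])
  have H: "P.prob {\<omega>\<in>space M. order_stat X n k \<omega> \<le> x} = \<Phi> x" for x
    unfolding \<Phi>_def F_def \<S>_def by (rule P.os_prob(2)[OF assms(2,3,6) Xm])
  have \<Phi>ODE: "ODErep \<Phi>"
    unfolding \<Phi>_def
  proof (rule ODErep_sum[OF finS])
    fix S assume S: "S \<in> \<S>"
    then have S': "S \<subseteq> {1..n}" by (simp add: \<S>_def)
    show "ODErep (\<lambda>x. (\<Prod>j\<in>S. F j x) * (\<Prod>j\<in>{1..n}-S. 1 - F j x))"
    proof (rule ODErep_mult)
      show "ODErep (\<lambda>x. \<Prod>j\<in>S. F j x)"
        by (rule ODErep_prod) (use S' finite_subset[OF S'] FODE in auto)
      show "ODErep (\<lambda>x. \<Prod>j\<in>{1..n}-S. 1 - F j x)"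
        by (rule ODErep_prod) (auto intro!: ODErep_diff[OF ODErep_const] FODE)
    qed
  qed
  have \<Phi>mono: "\<Phi> x \<le> \<Phi> y" if "x \<le> y" for x y
  proof -
    have "{\<omega>\<in>space M. order_stat X n k \<omega> \<le> x} \<subseteq> {\<omega>\<in>space M. order_stat X n k \<omega> \<le> y}"
      using that by auto
    from P.finite_measure_mono[OF this Hev] show ?thesis by (simp add: H)
  qed
  have \<Phi>le0: "\<Phi> x = 0" if "x \<le> 0" for x
    unfolding \<Phi>_def
  proof (rule sum.neutral, rule ballI)
    fix S assume S: "S \<in> \<S>"
    then have S': "S \<subseteq> {1..n}" "k \<le> card S" by (auto simp: \<S>_def)
    then have "S \<noteq> {}" using assms(2) by auto
    then obtain j where j: "j \<in> S" by auto
    have "(\<Prod>j\<in>S. F j x) = 0"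
    proof (rule prod_zero)
      show "finite S" using finite_subset[OF S'(1)] by simp
      have "j \<in> {1..n}" using j S' by auto
      then show "\<exists>a\<in>S. F a x = 0" using j Fle0[of j x] that by blast
    qed
    then show "(\<Prod>j\<in>S. F j x) * (\<Prod>j\<in>{1..n}-S. 1 - F j x) = 0" by simp
  qed
  obtain g0 where g0ODE: "ODErep g0" and g0d: "\<And>x. 0 \<le> x \<Longrightarrow> (\<Phi> has_real_derivative g0 x) (at x within {0..})"
    using ODErep_deriv[OF \<Phi>ODE] by blast
  define g where "g x = (if 0 \<le> x then g0 x else 0)" for x
  have gnn: "0 \<le> g x" for x
    using deriv_nonneg_mono[OF \<Phi>mono g0d] by (simp add: g_def)
  have g0cont: "continuous_on {0..} g0" by (rule ODErep_cont[OF g0ODE])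
  have gint_pos: "(g has_integral \<Phi> b - \<Phi> a) {a..b}" if "0 \<le> a" "a \<le> b" for a b
  proof -
    have "(g0 has_integral \<Phi> b - \<Phi> a) {a..b}"
    proof (rule fundamental_theorem_of_calculus[OF that(2)])
      fix x assume x: "x \<in> {a..b}"
      have "(\<Phi> has_real_derivative g0 x) (at x within {a..b})"
        by (rule DERIV_subset[OF g0d]) (use x that in auto)
      then show "(\<Phi> has_vector_derivative g0 x) (at x within {a..b})"
        by (simp add: has_real_derivative_iff_has_vector_derivative)
    qed
    moreover have "\<And>x. x \<in> {a..b} \<Longrightarrow> g0 x = g x" using that by (auto simp: g_def)
    ultimately show ?thesis using has_integral_cong[of "{a..b}" g0 g] by blast
  qed
  have gint_neg: "(g has_integral \<Phi> b - \<Phi> a) {a..b}" if "a \<le> b" "b \<le> 0" for a b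
  proof -
    have "((\<lambda>x. 0) has_integral 0) {a..b}" by (rule has_integral_0)
    have "(g has_integral 0) {a..b}"
      by (rule has_integral_spike[OF negligible_sing[of 0] _ \<open>((\<lambda>x. 0) has_integral 0) {a..b}\<close>]) (use that in \<open>auto simp: g_def\<close>)
    then show ?thesis using \<Phi>le0[of a] \<Phi>le0[of b] that by simp
  qed
  have gint: "(g has_integral \<Phi> b - \<Phi> a) {a..b}" if "a \<le> b" for a b
  proof (cases "0 \<le> a")
    case True then show ?thesis using gint_pos that by blast
  next
    case False
    show ?thesis
    proof (cases "b \<le> 0")
      case True then show ?thesis using gint_neg that by blast
    next
      case False': False
      have "(g has_integral (\<Phi> 0 - \<Phi> a) + (\<Phi> b - \<Phi> 0)) {a..b}"
        by (rule has_integral_combine[of a 0 b]) (use False False' in \<open>auto intro: gint_pos gint_neg\<close>)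
      then show ?thesis by simp
    qed
  qed
  have os_meas: "order_stat X n k \<in> borel_measurable M"
    unfolding borel_measurable_iff_le using Hev by blast
  have g_meas: "g \<in> borel_measurable borel"
  proof -
    have "(\<lambda>x. indicator {0..} x *\<^sub>R g0 x) \<in> borel_measurable borel"
      by (rule borel_measurable_continuous_on_indicator[OF _ g0cont]) simp
    moreover have "(\<lambda>x. indicator {0..} x *\<^sub>R g0 x) = g"
      by (auto simp: g_def indicator_def fun_eq_iff)
    ultimately show ?thesis by simp
  qed
  have eg_meas: "(\<lambda>x. ennreal (g x)) \<in> borel_measurable lborel"
    using g_meas by simp
  have emeas_Ioc: "emeasure (density lborel (\<lambda>x. ennreal (g x))) {a<..b} = ennreal (\<Phi> b - \<Phi> a)"
    if "a \<le> b" for a b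
  proof -
    have "emeasure (density lborel (\<lambda>x. ennreal (g x))) {a<..b} = (\<integral>\<^sup>+x. ennreal (g x) * indicator {a<..b} x \<partial>lborel)"
      by (rule emeasure_density[OF eg_meas]) simp
    also have "\<dots> = (\<integral>\<^sup>+x. ennreal (g x) * indicator {a..b} x \<partial>lborel)"
      by (rule nn_integral_cong_AE) (use AE_lborel_singleton[of a] in \<open>eventually_elim, auto simp: indicator_def\<close>)
    also have "\<dots> = ennreal (\<Phi> b - \<Phi> a)"
      by (rule nn_integral_has_integral_lebesgue'[OF _ gint[OF that]]) (rule gnn)
    finally show ?thesis .
  qed
  have distr_eq: "distr M lborel (order_stat X n k) = density lborel (\<lambda>x. ennreal (g x))"
  proof (rule measure_eqI_generator_eq[where \<Omega>=UNIV and E="range (\<lambda>(a, b). {a<..b::real})"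
        and A="\<lambda>i. {- real (i::nat)<..real i}"])
    fix Y assume "Y \<in> range (\<lambda>(a, b). {a<..b::real})"
    then obtain a b where Y: "Y = {a<..b}" by auto
    show "emeasure (distr M lborel (order_stat X n k)) Y = emeasure (density lborel (\<lambda>x. ennreal (g x))) Y"
    proof (cases "a \<le> b")
      case True
      have "emeasure (distr M lborel (order_stat X n k)) Y = emeasure M (order_stat X n k -` {a<..b} \<inter> space M)"
        unfolding Y by (rule emeasure_distr) (use os_meas in auto)
      also have "order_stat X n k -` {a<..b} \<inter> space M =
          {\<omega>\<in>space M. order_stat X n k \<omega> \<le> b} - {\<omega>\<in>space M. order_stat X n k \<omega> \<le> a}"
        by auto
      also have "emeasure M \<dots> = ennreal (\<Phi> b - \<Phi> a)"
      proof -
        have sub: "{\<omega>\<in>space M. order_stat X n k \<omega> \<le> a} \<subseteq> {\<omega>\<in>space M. order_stat X n k \<omega> \<le> b}"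
          using True by auto
        show ?thesis using P.finite_measure_Diff[OF Hev Hev sub] by (simp add: P.emeasure_eq_measure H)
      qed
      finally show ?thesis using emeas_Ioc[OF True] Y by simp
    next
      case False
      then show ?thesis using Y by simp
    qed
  next
    show "(\<Union>i. {- real (i::nat)<..real i}) = UNIV" by (rule UN_Ioc_eq_UNIV)
  next
    fix i :: nat
    show "emeasure (distr M lborel (order_stat X n k)) {- real i<..real i} \<noteq> \<infinity>"
      by (subst emeasure_distr) (use os_meas in \<open>auto simp: P.emeasure_eq_measure\<close>)
  qed (auto simp: borel_sigma_sets_Ioc Int_stable_def)
  have dist: "distributed M lborel (order_stat X n k) (\<lambda>x. ennreal (g x))"
    unfolding distributed_def using distr_eq eg_meas os_meas by simp
  have tot: "(g has_integral 1) {0..}"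
  proof -
    have "emeasure (density lborel (\<lambda>x. ennreal (g x))) UNIV = 1"
    proof -
      have "emeasure (distr M lborel (order_stat X n k)) UNIV = emeasure M (space M)"
        by (subst emeasure_distr) (use os_meas in auto)
      then show ?thesis using distr_eq P.emeasure_space_1 by simp
    qed
    then have "(\<integral>\<^sup>+x. ennreal (g x) \<partial>lborel) = ennreal 1"
      by (simp add: emeasure_density[OF eg_meas])
    then have "(g has_integral 1) UNIV"
      by (intro nn_integral_has_integral g_meas gnn) auto
    moreover have "(\<lambda>x. if x \<in> {0..} then g x else 0) = g"
      by (auto simp: g_def fun_eq_iff)
    ultimately show ?thesis using has_integral_restrict_UNIV[of "{0..}" g 1] by simp
  qed
  have ME: "ME_density g"
  proof -
    obtain m \<alpha> T t where "\<alpha> \<in> carrier_vec m" "T \<in> carrier_mat m m" "t \<in> carrier_vec m"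
      and eq: "\<forall>x\<ge>0. g0 x = scalar_prod \<alpha> (mat_exp (x \<cdot>\<^sub>m T) *\<^sub>v t)"
      using ODErep_ME[OF g0ODE] by blast
    then show ?thesis unfolding ME_density_def
      by (intro exI[of _ m] exI[of _ \<alpha>] exI[of _ T] exI[of _ t]) (use gnn tot in \<open>auto simp: g_def\<close>)
  qed
  have "MEam g"
    unfolding MEam_def
    by (intro conjI allI gnn exI[of _ "1::nat"] exI[of _ "\<lambda>_. 1::real"] exI[of _ "\<lambda>_. g"]) (use ME in auto)
  with dist show ?thesis by blast
qed

end
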